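(* There is an absolute constant $c_0\in(0,1)$ such that the following holds. Let $A\in[0,1]^{m\times n}$ with $0<\Delta_1<c_0$, let $x\in\mathbb{R}_{\ge0}^n$, and let $\delta\in(0,1)$ with $\delta\ge2\sqrt{\Delta_1\ln(1/\Delta_1)}$ and $\alpha=\frac{1+\delta+\delta^2/2}{1-\delta}$. Let $i\in[m]$ and let $\theta_i\in(0,\Delta_1]$ satisfy $\sum_{j:A_{i,j}\le\theta_i}A_{i,j}x_j\ge1-\delta$. If $z$ is the randomized rounding of $\alpha x$, then $\Pr[(Az)_i<1]\le\theta_i$.
   Context: $\Delta_1=\max_{j\in[n]}\sum_{i=1}^mA_{i,j}$. Randomized rounding of $\alpha x$: $z\in\mathbb{Z}_{\ge0}^n$ is the random vector with independent coordinates $z_j=\lfloor\alpha x_j\rfloor+B_j$, where $B_j\in\{0,1\}$ is Bernoulli with $\Pr[B_j=1]=\alpha x_j-\lfloor\alpha x_j\rfloor$. *)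

theory Defs
  imports "HOL-Probability.Probability"
begin

text \<open>Matrices A in [0,1]^(m x n) are functions nat => nat => real, used on i < m, j < n.\<close>

definition Delta1 :: "nat \<Rightarrow> nat \<Rightarrow> (nat \<Rightarrow> nat \<Rightarrow> real) \<Rightarrow> real" where
  "Delta1 m n A = Max ((\<lambda>j. \<Sum>i<m. A i j) ` {..<n})"

definition rand_round :: "nat \<Rightarrow> (nat \<Rightarrow> real) \<Rightarrow> (nat \<Rightarrow> int) pmf" where
  "rand_round n y =
     map_pmf (\<lambda>B j. if j < n then \<lfloor>y j\<rfloor> + (if B j then 1 else 0) else 0)
       (Pi_pmf {..<n} False (\<lambda>j. bernoulli_pmf (y j - of_int \<lfloor>y j\<rfloor>)))"

end

theory Submission
  imports Defs
begin

lemma factor_bound: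
  fixes f q c :: real
  assumes "0 \<le> f" "0 \<le> q" "q \<le> 1" "0 \<le> c"
  shows "exp(-c*(f+1)) * q + exp(-c*f) * (1-q) \<le> exp((exp(-c) - 1)*(f+q))"
proof -
  have e1: "-c \<le> exp(-c) - 1" using exp_ge_add_one_self[of "-c"] by linarith
  have a: "exp(-c*f) \<le> exp((exp(-c)-1)*f)"
    using mult_right_mono[OF e1 assms(1)] by simp
  have b: "1 + q*(exp(-c)-1) \<le> exp(q*(exp(-c)-1))" by (rule exp_ge_add_one_self)
  have bnn: "0 \<le> 1 + q*(exp(-c)-1)"
  proof -
    have "q*(exp(-c)-1) \<ge> 1*(exp(-c)-1)"
      using assms(3) by (intro mult_right_mono_neg) (auto simp: assms)
    then show ?thesis by (smt (verit) exp_gt_zero)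
  qed
  have "exp(-c*(f+1)) * q + exp(-c*f) * (1-q) = exp(-c*f) * (1 + q*(exp(-c)-1))"
    by (simp add: distrib_left exp_add[symmetric] algebra_simps)
  also have "\<dots> \<le> exp((exp(-c)-1)*f) * exp(q*(exp(-c)-1))"
    using a b bnn by (intro mult_mono) auto
  also have "\<dots> = exp((exp(-c) - 1)*(f+q))" by (simp add: exp_add[symmetric] algebra_simps)
  finally show ?thesis .
qed

lemma convex_bound:
  fixes s t :: real
  assumes "0 \<le> s" "0 \<le> t" "t \<le> 1"
  shows "exp(-s*t) \<le> 1 - t + t*exp(-s)"
proof -
  have "convex_on UNIV (\<lambda>x. exp(s*x))" by (rule convex_on_exp) fact
  from convex_onD[OF this, of t 0 "-1"] assms show ?thesis by simp
qed

lemma markov_bound: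
  fixes a y :: "nat \<Rightarrow> real" and L :: real
  assumes a: "\<And>j. j < n \<Longrightarrow> 0 \<le> a j" and y: "\<And>j. j < n \<Longrightarrow> 0 \<le> y j" and L: "0 \<le> L"
  shows "measure_pmf.prob (rand_round n y) {z. (\<Sum>j<n. a j * real_of_int (z j)) < 1}
          \<le> exp (L + (\<Sum>j<n. (exp(-L*a j) - 1) * y j))"
proof -
  define q where "q j = y j - of_int \<lfloor>y j\<rfloor>" for j
  define p where "p = Pi_pmf {..<n} False (\<lambda>j. bernoulli_pmf (q j))"
  define fl where "fl j = real_of_int \<lfloor>y j\<rfloor>" for j
  define S where "S b = (\<Sum>j<n. a j * (fl j + (if b j then 1 else 0)))" for b :: "nat \<Rightarrow> bool"
  define B where "B = {b. S b < 1}"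
  define g where "g b = exp L * (\<Prod>j<n. exp (- L * a j * (fl j + (if b j then 1 else 0))))" for b :: "nat \<Rightarrow> bool"
  have q01: "0 \<le> q j" "q j \<le> 1" for j unfolding q_def by linarith+
  have fl0: "0 \<le> fl j" if "j < n" for j using y[OF that] unfolding fl_def by simp
  have fin: "finite (set_pmf p)" unfolding p_def
    by (subst set_Pi_pmf) (auto intro!: finite_PiE_dflt)
  have "measure_pmf.prob (rand_round n y) {z. (\<Sum>j<n. a j * real_of_int (z j)) < 1} = measure_pmf.prob p B"
    unfolding rand_round_def p_def B_def S_def fl_def q_def
    by (simp add: vimage_def if_distrib[of real_of_int] cong: if_cong)
  also have "\<dots> = measure_pmf.expectation p (indicator B)" by simp
  also have "\<dots> \<le> measure_pmf.expectation p g"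
  proof (rule integral_mono)
    show "integrable (measure_pmf p) (indicator B :: _ \<Rightarrow> real)" "integrable (measure_pmf p) g"
      using fin by (auto intro: integrable_measure_pmf_finite)
    fix b
    have gS: "g b = exp (L - L * S b)"
      unfolding g_def S_def
      by (simp add: exp_sum[symmetric] exp_add[symmetric] sum_distrib_left sum.distrib[symmetric] algebra_simps)
    show "(indicator B b :: real) \<le> g b"
    proof (cases "b \<in> B")
      case True
      then have "L * S b \<le> L * 1" using L unfolding B_def by (intro mult_left_mono) auto
      then show ?thesis using True gS by simp
    next
      case False then show ?thesis by (simp add: g_def prod_nonneg)
    qed
  qed
  also have "measure_pmf.expectation p g =
     exp L * measure_pmf.expectation p (\<lambda>b. \<Prod>j<n. exp (- L * a j * (fl j + (if b j then 1 else 0))))"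
    unfolding g_def by simp
  also have "measure_pmf.expectation p (\<lambda>b. \<Prod>j<n. exp (- L * a j * (fl j + (if b j then 1 else 0))))
     = (\<Prod>j<n. measure_pmf.expectation (bernoulli_pmf (q j)) (\<lambda>v. exp (- L * a j * (fl j + (if v then 1 else 0)))))"
    unfolding p_def
    by (rule expectation_prod_Pi_pmf) (auto intro: integrable_measure_pmf_finite)
  also have "\<dots> \<le> (\<Prod>j<n. exp ((exp(-L*a j) - 1) * y j))"
  proof (rule prod_mono)
    fix j assume "j \<in> {..<n}"
    then have j: "j < n" by simp
    have "measure_pmf.expectation (bernoulli_pmf (q j)) (\<lambda>v. exp (- L * a j * (fl j + (if v then 1 else 0))))
       = exp(-(L*a j)*(fl j+1)) * q j + exp(-(L*a j)*fl j) * (1-q j)"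
      using q01[of j] by simp
    also have "\<dots> \<le> exp((exp(-(L*a j)) - 1)*(fl j+q j))"
      by (rule factor_bound) (use q01[of j] fl0[OF j] L a[OF j] in auto)
    also have "fl j + q j = y j" unfolding fl_def q_def by simp
    finally show "0 \<le> measure_pmf.expectation (bernoulli_pmf (q j)) (\<lambda>v. exp (- L * a j * (fl j + (if v then 1 else 0)))) \<and>
        measure_pmf.expectation (bernoulli_pmf (q j)) (\<lambda>v. exp (- L * a j * (fl j + (if v then 1 else 0)))) \<le> exp ((exp(-L*a j) - 1) * y j)"
      using q01[of j] by simp
  qed
  also have "(\<Prod>j<n. exp ((exp(-L*a j) - 1) * y j)) = exp (\<Sum>j<n. (exp(-L*a j) - 1) * y j)"
    by (simp add: exp_sum)
  finally show ?thesis by (simp add: exp_add mult_left_mono)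
qed

lemma exponent_bound:
  fixes d u :: real
  assumes "0 < d" "d < 1" "0 < u" "u * (1 + d/2 + (d/2)^2/2) \<le> 1"
  shows "d/2 + (u - 1) * (1 + d + d^2/2) \<le> -(d^2/4)"
proof -
  define w where "w = 1 + d/2 + (d/2)^2/2"
  have w: "w > 0" unfolding w_def using assms by (simp add: add_pos_nonneg)
  have u: "u \<le> 1/w" using assms w unfolding w_def by (simp add: field_simps)
  have "d/2 + (u - 1) * (1 + d + d^2/2) \<le> d/2 + (1/w - 1) * (1 + d + d^2/2)"
    using u assms by (intro add_left_mono mult_right_mono) (auto simp: add_pos_nonneg)
  also have "\<dots> \<le> -(d^2/4)"
  proof -
    have eq: "(d/2)*w + (1 - w) * (1 + d + d^2/2) + d^2 * w / 4 = -(d^2/8 + 3*d^3/16 + d^4/32)"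
      unfolding w_def by (simp add: field_simps power2_eq_square power3_eq_cube power4_eq_xxxx)
    have "0 \<le> d^2/8 + 3*d^3/16 + d^4/32" using assms by simp
    then have "(d/2)*w + (1 - w) * (1 + d + d^2/2) \<le> -(d^2 * w / 4)" using eq by linarith
    then show ?thesis using w by (simp add: field_simps)
  qed
  finally show ?thesis .
qed

lemma xlnx_mono:
  fixes t D :: real
  assumes "0 < t" "t \<le> D" "1 \<le> ln (1/D)"
  shows "t * ln (1/t) \<le> D * ln (1/D)"
proof -
  have D: "0 < D" using assms by simp
  have "ln (1/t) = ln (1/D) + ln (D/t)" using assms D by (simp add: ln_div ln_mult)
  moreover have "ln (D/t) \<le> D/t - 1" using assms D by (intro ln_le_minus_one) simp
  ultimately have "t * ln (1/t) \<le> t * ln (1/D) + t * (D/t - 1)"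
    using assms by (simp add: distrib_left)
  also have "\<dots> = t * ln (1/D) + (D - t)" using assms by (simp add: field_simps)
  also have "\<dots> \<le> D * ln (1/D)"
  proof -
    have "(D - t) * 1 \<le> (D - t) * ln (1/D)" using assms by (intro mult_left_mono) auto
    then show ?thesis by (simp add: algebra_simps)
  qed
  finally show ?thesis .
qed


theorem mainTheorem16:
  shows "\<exists>c0::real. 0 < c0 \<and> c0 < 1 \<and>
    (\<forall>(m::nat) (n::nat) (A::nat \<Rightarrow> nat \<Rightarrow> real) (x::nat \<Rightarrow> real) (\<delta>::real) (i::nat) (\<theta>::real).
       0 < n \<and>
       (\<forall>i<m. \<forall>j<n. 0 \<le> A i j \<and> A i j \<le> 1) \<and>
       0 < Delta1 m n A \<and> Delta1 m n A < c0 \<and>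
       (\<forall>j<n. 0 \<le> x j) \<and>
       0 < \<delta> \<and> \<delta> < 1 \<and>
       \<delta> \<ge> 2 * sqrt (Delta1 m n A * ln (1 / Delta1 m n A)) \<and>
       i < m \<and> 0 < \<theta> \<and> \<theta> \<le> Delta1 m n A \<and>
       (\<Sum>j\<in>{j. j < n \<and> A i j \<le> \<theta>}. A i j * x j) \<ge> 1 - \<delta>
     \<longrightarrow>
       (let \<alpha> = (1 + \<delta> + \<delta>\<^sup>2 / 2) / (1 - \<delta>) in
        measure_pmf.prob (rand_round n (\<lambda>j. \<alpha> * x j))
          {z. (\<Sum>j<n. A i j * real_of_int (z j)) < 1} \<le> \<theta>))"
proof (intro exI[of _ "1/3"] conjI allI impI)
  fix m n :: nat and A :: "nat \<Rightarrow> nat \<Rightarrow> real" and x :: "nat \<Rightarrow> real" and \<delta> :: real and i :: nat and \<theta> :: real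
  assume H: "0 < n \<and>
       (\<forall>i<m. \<forall>j<n. 0 \<le> A i j \<and> A i j \<le> 1) \<and>
       0 < Delta1 m n A \<and> Delta1 m n A < 1/3 \<and>
       (\<forall>j<n. 0 \<le> x j) \<and>
       0 < \<delta> \<and> \<delta> < 1 \<and>
       \<delta> \<ge> 2 * sqrt (Delta1 m n A * ln (1 / Delta1 m n A)) \<and>
       i < m \<and> 0 < \<theta> \<and> \<theta> \<le> Delta1 m n A \<and>
       (\<Sum>j\<in>{j. j < n \<and> A i j \<le> \<theta>}. A i j * x j) \<ge> 1 - \<delta>"
  define D where "D = Delta1 m n A"
  define \<alpha> where "\<alpha> = (1 + \<delta> + \<delta>\<^sup>2 / 2) / (1 - \<delta>)"
  define s where "s = \<delta>/2"
  define L where "L = s/\<theta>"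
  define Sm where "Sm = {j. j < n \<and> A i j \<le> \<theta>}"
  have Apos: "\<And>j. j < n \<Longrightarrow> 0 \<le> A i j" using H by blast
  have xpos: "\<And>j. j < n \<Longrightarrow> 0 \<le> x j" using H by blast
  have D0: "0 < D" and D3: "D < 1/3" and d0: "0 < \<delta>" and d1: "\<delta> < 1"
    and dD: "\<delta> \<ge> 2 * sqrt (D * ln (1/D))" and th0: "0 < \<theta>" and thD: "\<theta> \<le> D"
    and sumx: "(\<Sum>j\<in>Sm. A i j * x j) \<ge> 1 - \<delta>"
    using H unfolding D_def Sm_def by auto
  have apos: "0 < \<alpha>" unfolding \<alpha>_def using d0 d1 by (simp add: add_pos_nonneg)
  have ypos: "\<And>j. j < n \<Longrightarrow> 0 \<le> \<alpha> * x j" using apos xpos by simp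
  have L0: "0 \<le> L" unfolding L_def s_def using d0 th0 by simp
  have mk: "measure_pmf.prob (rand_round n (\<lambda>j. \<alpha> * x j)) {z. (\<Sum>j<n. A i j * real_of_int (z j)) < 1}
          \<le> exp (L + (\<Sum>j<n. (exp(-L*A i j) - 1) * (\<alpha> * x j)))"
    by (rule markov_bound) (use Apos ypos L0 in auto)
  have term_le: "(exp(-L*A i j) - 1) * (\<alpha> * x j) \<le> (if j \<in> Sm then (A i j/\<theta>) * (exp(-s) - 1) * (\<alpha> * x j) else 0)"
    if j: "j < n" for j
  proof (cases "j \<in> Sm")
    case True
    then have t1: "A i j / \<theta> \<le> 1" using th0 unfolding Sm_def by simp
    have "exp(-L*A i j) = exp(-s*(A i j/\<theta>))" unfolding L_def by simp
    also have "\<dots> \<le> 1 - A i j/\<theta> + (A i j/\<theta>)*exp(-s)"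
      by (rule convex_bound) (use d0 t1 th0 Apos[OF j] in \<open>auto simp: s_def\<close>)
    finally have "exp(-L*A i j) - 1 \<le> (A i j/\<theta>) * (exp(-s) - 1)" by (simp add: right_diff_distrib)
    then have "(exp(-L*A i j) - 1) * (\<alpha> * x j) \<le> ((A i j/\<theta>) * (exp(-s) - 1)) * (\<alpha> * x j)"
      using ypos[OF j] by (rule mult_right_mono)
    then show ?thesis using True by simp
  next
    case False
    have "exp(-L*A i j) \<le> 1" using L0 Apos[OF j] by simp
    then show ?thesis using False ypos[OF j] by (simp add: mult_nonpos_nonneg)
  qed
  have Sm_sub: "Sm \<subseteq> {..<n}" unfolding Sm_def by auto
  have "(\<Sum>j<n. (exp(-L*A i j) - 1) * (\<alpha> * x j)) \<le> (\<Sum>j<n. (if j \<in> Sm then (A i j/\<theta>) * (exp(-s) - 1) * (\<alpha> * x j) else 0))"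
    by (rule sum_mono) (use term_le in auto)
  also have "\<dots> = (\<Sum>j\<in>Sm. (A i j/\<theta>) * (exp(-s) - 1) * (\<alpha> * x j))"
    using Sm_sub by (simp add: sum.If_cases Int_absorb1 inf.absorb2)
  also have "\<dots> = ((exp(-s) - 1) * \<alpha> / \<theta>) * (\<Sum>j\<in>Sm. A i j * x j)"
    by (simp add: sum_distrib_left sum_divide_distrib algebra_simps)
  also have "\<dots> \<le> ((exp(-s) - 1) * \<alpha> / \<theta>) * (1 - \<delta>)"
  proof (rule mult_left_mono_neg[OF sumx])
    have "exp(-s) \<le> 1" unfolding s_def using d0 by simp
    then show "(exp(-s) - 1) * \<alpha> / \<theta> \<le> 0" using apos th0
      by (simp add: divide_nonpos_pos mult_nonpos_nonneg)
  qed
  also have "\<dots> = (exp(-s) - 1) * (1 + \<delta> + \<delta>^2/2) / \<theta>"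
  proof -
    have "\<alpha> * (1 - \<delta>) = 1 + \<delta> + \<delta>^2/2" unfolding \<alpha>_def using d1 by simp
    then show ?thesis by (metis (no_types, lifting) mult.assoc times_divide_eq_left divide_mult_eq mult.commute)
  qed
  finally have sumb: "(\<Sum>j<n. (exp(-L*A i j) - 1) * (\<alpha> * x j)) \<le> (exp(-s) - 1) * (1 + \<delta> + \<delta>^2/2) / \<theta>" .
  have expb: "exp(-s) * (1 + s + s^2/2) \<le> 1"
  proof -
    have "1 + s + s^2/2 \<le> exp s" by (rule exp_lower_Taylor_quadratic) (use d0 in \<open>simp add: s_def\<close>)
    then have "exp(-s) * (1 + s + s^2/2) \<le> exp(-s) * exp s" by (intro mult_left_mono) auto
    then show ?thesis by (simp add: exp_minus field_simps)
  qed
  have eb: "\<delta>/2 + (exp(-s) - 1) * (1 + \<delta> + \<delta>^2/2) \<le> -(\<delta>^2/4)"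
    by (rule exponent_bound) (use d0 d1 expb in \<open>auto simp: s_def\<close>)
  have "L + (\<Sum>j<n. (exp(-L*A i j) - 1) * (\<alpha> * x j)) \<le> L + (exp(-s) - 1) * (1 + \<delta> + \<delta>^2/2) / \<theta>"
    using sumb by simp
  also have "\<dots> = (\<delta>/2 + (exp(-s) - 1) * (1 + \<delta> + \<delta>^2/2)) / \<theta>"
    unfolding L_def s_def by (simp add: add_divide_distrib)
  also have "\<dots> \<le> (-(\<delta>^2/4)) / \<theta>" using divide_right_mono[OF eb, of \<theta>] th0 by simp
  also have "\<dots> \<le> - ln (1/\<theta>)"
  proof -
    have lnD: "1 \<le> ln (1/D)"
    proof -
      have "D * exp 1 \<le> D * 3" using exp_le D0 by (intro mult_left_mono) auto
      then have "D * exp 1 < 1" using D3 by linarith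
      then have "exp 1 < 1/D" using D0 by (simp add: field_simps)
      then have "ln (exp 1) < ln (1/D)" using D0 by (subst ln_less_cancel_iff) auto
      then show ?thesis by simp
    qed
    have X0: "0 \<le> D * ln (1/D)" using D0 D3 lnD by (intro mult_nonneg_nonneg) auto
    have "(2 * sqrt (D * ln (1/D)))^2 \<le> \<delta>^2"
      by (rule power_mono[OF dD]) (use X0 in simp)
    then have "4 * (D * ln (1/D)) \<le> \<delta>^2" using X0 by (simp add: power_mult_distrib)
    moreover have "\<theta> * ln (1/\<theta>) \<le> D * ln (1/D)" by (rule xlnx_mono) (use th0 thD lnD in auto)
    ultimately have "\<theta> * ln (1/\<theta>) \<le> \<delta>^2/4" by simp
    then show ?thesis using th0 by (simp add: field_simps)
  qed
  finally have "exp (L + (\<Sum>j<n. (exp(-L*A i j) - 1) * (\<alpha> * x j))) \<le> exp (- ln (1/\<theta>))" by simp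
  also have "\<dots> = \<theta>" using th0 by (simp add: ln_div exp_minus)
  finally show "let \<alpha> = (1 + \<delta> + \<delta>\<^sup>2 / 2) / (1 - \<delta>) in
        measure_pmf.prob (rand_round n (\<lambda>j. \<alpha> * x j))
          {z. (\<Sum>j<n. A i j * real_of_int (z j)) < 1} \<le> \<theta>"
    using mk unfolding \<alpha>_def Let_def by simp
qed simp_all

end
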